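(* Let $c\in\mathbb{R}$, $\beta\geq0$, $q\in(0,1)$, and let $J:\mathbb{Z}\to\mathbb{R}$ satisfy $$\sum_{i=-\infty}^0 \left(1+q^{2(i-c)}\frac{e^{\beta J(i-1)}}{e^{\beta |J(i)|}+q^2 e^{\beta |J(i-2)|}}\right)^{-1} + \sum_{i=1}^\infty \left(1+q^{-2(i-c)}\frac{e^{\beta J(i-1)}}{e^{\beta |J(i)|}+q^{-2} e^{\beta |J(i-2)|}}\right)^{-1}<\infty.$$ Then for every $n\in\mathbb{Z}$, $$\mu_{J}^c(\{N=n\}) = q^{-2nc + n(n+1)}\,\mu_{J}^c\Big(\mathbb{1}_{\{N=0\}}e^{-\beta H^{(n)}_{J}}\Big),\qquad\text{where } H_{J}^{(n)}(\sigma) = \sum_{i\in\mathbb Z} \big(J(i+n) - J(i)\big)\mathbb{1}_{\{\sigma_{i}\neq \sigma_{i+1}\}}.$$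
   Context: Spin configurations are $\sigma\in\{-1,+1\}^{\mathbb{Z}}$. Let $\mathcal{B}$ be the set of configurations for which there exist $a,b\in\mathbb{Z}$ with $\sigma_{a-i}=-1$ and $\sigma_{b+i}=+1$ for all $i\in\mathbb{N}$. The Hamiltonian is $H_J(\sigma)=\sum_{i\in\mathbb{Z}}J(i)\mathbb{1}_{\{\sigma_i\neq\sigma_{i+1}\}}$ and $f_c(\sigma)=2\sum_{i=1}^\infty(i-c)\mathbb{1}_{\{\sigma_i=-1\}}-2\sum_{i=-\infty}^0(i-c)\mathbb{1}_{\{\sigma_i=1\}}$. The probability measure $\mu^c_J$ is given by $\mu^c_J(\sigma)=e^{-\beta H_J(\sigma)}q^{f_c(\sigma)}/Z^J_{\beta,q,c}$ with $Z^J_{\beta,q,c}=\sum_\sigma e^{-\beta H_J(\sigma)}q^{f_c(\sigma)}$; under the displayed summability condition it is concentrated on $\mathcal{B}$. For $\sigma\in\mathcal{B}$ let $N_+(\sigma)=\#\{i\leq 0:\sigma_i=+1\}$, $N_-(\sigma)=\#\{i\geq1:\sigma_i=-1\}$ (both finite), and $N(\sigma)=N_-(\sigma)-N_+(\sigma)$. For a function $F$, $\mu^c_J(F)$ denotes the expectation of $F$ under $\mu^c_J$. *)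

theory Defs
  imports "HOL-Analysis.Analysis"
begin

type_synonym config = "int \<Rightarrow> int"

definition spin_configs :: "config set" where
  "spin_configs = {\<sigma>. \<forall>i. \<sigma> i = -1 \<or> \<sigma> i = 1}"

definition Bset :: "config set" where
  "Bset = {\<sigma>\<in>spin_configs. \<exists>a b. \<forall>i::nat. \<sigma> (a - int i) = -1 \<and> \<sigma> (b + int i) = 1}"

text \<open>Hamiltonian (a finite sum for configurations in B).\<close>
definition H :: "(int \<Rightarrow> real) \<Rightarrow> config \<Rightarrow> real" where
  "H J \<sigma> = (\<Sum>i\<in>{i. \<sigma> i \<noteq> \<sigma> (i+1)}. J i)"

definition Hn :: "(int \<Rightarrow> real) \<Rightarrow> int \<Rightarrow> config \<Rightarrow> real" where
  "Hn J n \<sigma> = (\<Sum>i\<in>{i. \<sigma> i \<noteq> \<sigma> (i+1)}. J (i + n) - J i)"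

definition fc :: "real \<Rightarrow> config \<Rightarrow> real" where
  "fc c \<sigma> = 2 * (\<Sum>i\<in>{i. i \<ge> 1 \<and> \<sigma> i = -1}. (real_of_int i - c))
             - 2 * (\<Sum>i\<in>{i. i \<le> 0 \<and> \<sigma> i = 1}. (real_of_int i - c))"

definition Nplus :: "config \<Rightarrow> nat" where
  "Nplus \<sigma> = card {i. i \<le> 0 \<and> \<sigma> i = 1}"

definition Nminus :: "config \<Rightarrow> nat" where
  "Nminus \<sigma> = card {i. i \<ge> 1 \<and> \<sigma> i = -1}"

definition Ncount :: "config \<Rightarrow> int" where
  "Ncount \<sigma> = int (Nminus \<sigma>) - int (Nplus \<sigma>)"

definition weight :: "real \<Rightarrow> real \<Rightarrow> real \<Rightarrow> (int \<Rightarrow> real) \<Rightarrow> config \<Rightarrow> real" where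
  "weight \<beta> q c J \<sigma> = exp (- \<beta> * H J \<sigma>) * q powr (fc c \<sigma>)"

definition Zpart :: "real \<Rightarrow> real \<Rightarrow> real \<Rightarrow> (int \<Rightarrow> real) \<Rightarrow> real" where
  "Zpart \<beta> q c J = (\<Sum>\<^sub>\<infinity>\<sigma>\<in>Bset. weight \<beta> q c J \<sigma>)"

definition mu_exp :: "real \<Rightarrow> real \<Rightarrow> real \<Rightarrow> (int \<Rightarrow> real) \<Rightarrow> (config \<Rightarrow> real) \<Rightarrow> real" where
  "mu_exp \<beta> q c J F = (\<Sum>\<^sub>\<infinity>\<sigma>\<in>Bset. weight \<beta> q c J \<sigma> * F \<sigma>) / Zpart \<beta> q c J"

definition mu_prob :: "real \<Rightarrow> real \<Rightarrow> real \<Rightarrow> (int \<Rightarrow> real) \<Rightarrow> config set \<Rightarrow> real" where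
  "mu_prob \<beta> q c J A = mu_exp \<beta> q c J (indicator A)"

end

theory Submission
  imports Defs
begin

definition shift :: "int \<Rightarrow> config \<Rightarrow> config" where
  "shift n \<sigma> = (\<lambda>i. \<sigma> (i - n))"

lemma shift_add: "shift (m + n) \<sigma> = shift m (shift n \<sigma>)"
  by (simp add: shift_def algebra_simps)

lemma shift_0[simp]: "shift 0 \<sigma> = \<sigma>"
  by (simp add: shift_def)

lemma shift_Bset: assumes "\<sigma> \<in> Bset" shows "shift n \<sigma> \<in> Bset"
proof -
  from assms obtain a b where ab: "\<forall>i::nat. \<sigma> (a - int i) = -1 \<and> \<sigma> (b + int i) = 1"
    and sp: "\<sigma> \<in> spin_configs" unfolding Bset_def by blast
  have "\<forall>i::nat. shift n \<sigma> ((a+n) - int i) = -1 \<and> shift n \<sigma> ((b+n) + int i) = 1"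
    using ab by (simp add: shift_def algebra_simps)
  moreover have "shift n \<sigma> \<in> spin_configs" using sp by (simp add: spin_configs_def shift_def)
  ultimately show ?thesis unfolding Bset_def by blast
qed

lemma Bset_finite:
  assumes "\<sigma> \<in> Bset"
  shows "finite {i. i \<ge> 1 \<and> \<sigma> i = -1}" "finite {i. i \<le> 0 \<and> \<sigma> i = 1}"
proof -
  from assms obtain a b where ab: "\<forall>i::nat. \<sigma> (a - int i) = -1 \<and> \<sigma> (b + int i) = 1"
    unfolding Bset_def by blast
  have "{i. i \<ge> 1 \<and> \<sigma> i = -1} \<subseteq> {1..b}"
  proof
    fix i assume i: "i \<in> {i. i \<ge> 1 \<and> \<sigma> i = -1}"
    have "i \<le> b"
    proof (rule ccontr)
      assume "\<not> i \<le> b"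
      then have "i = b + int (nat (i - b))" by simp
      then have "\<sigma> i = 1" using ab by metis
      with i show False by simp
    qed
    with i show "i \<in> {1..b}" by simp
  qed
  then show "finite {i. i \<ge> 1 \<and> \<sigma> i = -1}" by (rule finite_subset) simp
  have "{i. i \<le> 0 \<and> \<sigma> i = 1} \<subseteq> {a..0}"
  proof
    fix i assume i: "i \<in> {i. i \<le> 0 \<and> \<sigma> i = 1}"
    have "a \<le> i"
    proof (rule ccontr)
      assume "\<not> a \<le> i"
      then have "i = a - int (nat (a - i))" by simp
      then have "\<sigma> i = -1" using ab by metis
      with i show False by simp
    qed
    with i show "i \<in> {a..0}" by simp
  qed
  then show "finite {i. i \<le> 0 \<and> \<sigma> i = 1}" by (rule finite_subset) simp
qed

lemma sum_shift1:
  assumes "finite S"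
  shows "(\<Sum>i\<in>(\<lambda>j. j+1) ` S. real_of_int i - c) = (\<Sum>j\<in>S. real_of_int j - c) + real (card S)"
proof -
  have "(\<Sum>i\<in>(\<lambda>j. j+1) ` S. real_of_int i - c) = (\<Sum>j\<in>S. (real_of_int j - c) + 1)"
    by (subst sum.reindex) (auto simp: inj_on_def intro!: sum.cong)
  also have "\<dots> = (\<Sum>j\<in>S. real_of_int j - c) + real (card S)"
    by (simp add: sum.distrib)
  finally show ?thesis .
qed

lemma shift1:
  assumes B: "\<sigma> \<in> Bset"
  shows "Ncount (shift 1 \<sigma>) = Ncount \<sigma> + 1
    \<and> fc c (shift 1 \<sigma>) = fc c \<sigma> + 2 * Ncount \<sigma> + 2 - 2 * c"
proof -
  define A where "A = {i. i \<ge> 1 \<and> \<sigma> i = -1}"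
  define P where "P = {i. i \<le> 0 \<and> \<sigma> i = (1::int)}"
  have fA: "finite A" and fP: "finite P" using Bset_finite[OF B] by (auto simp: A_def P_def)
  have sp: "\<sigma> 0 = -1 \<or> \<sigma> 0 = 1" using B by (auto simp: Bset_def spin_configs_def)
  have eA: "{i. i \<ge> 1 \<and> shift 1 \<sigma> i = -1} = (\<lambda>j. j+1) ` {j. j \<ge> 0 \<and> \<sigma> j = -1}"
    apply (auto simp: shift_def)
    apply (rule_tac x="x - 1" in image_eqI)
    by auto
  have eP: "{i. i \<le> 0 \<and> shift 1 \<sigma> i = 1} = (\<lambda>j. j+1) ` {j. j \<le> -1 \<and> \<sigma> j = 1}"
    apply (auto simp: shift_def)
    apply (rule_tac x="x - 1" in image_eqI)
    by auto
  have cA: "card ((\<lambda>j. j+1) ` S) = card S" for S :: "int set"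
    by (rule card_image) (auto simp: inj_on_def)
  from sp show ?thesis
  proof
    assume s0: "\<sigma> 0 = -1"
    have e1: "{j. j \<ge> 0 \<and> \<sigma> j = -1} = insert 0 A" using s0 by (auto simp: A_def)
    have e2: "{j. j \<le> -1 \<and> \<sigma> j = 1} = P" using s0 apply (auto simp: P_def) by (smt (verit))
    have n0: "0 \<notin> A" by (simp add: A_def)
    have N: "Ncount (shift 1 \<sigma>) = Ncount \<sigma> + 1"
      unfolding Ncount_def Nminus_def Nplus_def eA eP e1 e2 cA
      using fA n0 by (simp add: A_def[symmetric] P_def[symmetric])
    have "fc c (shift 1 \<sigma>) = 2 * ((\<Sum>j\<in>A. real_of_int j - c) + real (card A) + (1 - c))
       - 2 * ((\<Sum>j\<in>P. real_of_int j - c) + real (card P))"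
    proof -
      have h: "(\<Sum>i\<in>(\<lambda>j. j+1) ` insert 0 A. real_of_int i - c)
          = (\<Sum>j\<in>A. real_of_int j - c) + real (card A) + (1 - c)"
        using sum_shift1[of "insert 0 A" c] fA n0 by simp
      show ?thesis unfolding fc_def eA eP e1 e2 h sum_shift1[OF fP] by simp
    qed
    moreover have "fc c \<sigma> = 2 * (\<Sum>j\<in>A. real_of_int j - c) - 2 * (\<Sum>j\<in>P. real_of_int j - c)"
      by (simp add: fc_def A_def P_def)
    moreover have "real_of_int (Ncount \<sigma>) = real (card A) - real (card P)"
      by (simp add: Ncount_def Nminus_def Nplus_def A_def P_def)
    ultimately show ?thesis using N by simp
  next
    assume s0: "\<sigma> 0 = 1"
    have e1: "{j. j \<ge> 0 \<and> \<sigma> j = -1} = A" using s0 apply (auto simp: A_def) by (smt (verit))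
    have e2: "{j. j \<le> -1 \<and> \<sigma> j = 1} = P - {0}" by (auto simp: P_def)
    have n0: "0 \<in> P" using s0 by (simp add: P_def)
    have cP: "card P = card (P - {0}) + 1" using fP n0
      by (metis card_Suc_Diff1 Suc_eq_plus1)
    have N: "Ncount (shift 1 \<sigma>) = Ncount \<sigma> + 1"
      unfolding Ncount_def Nminus_def Nplus_def eA eP e1 e2 cA
      using cP by (simp add: A_def[symmetric] P_def[symmetric])
    have sP: "(\<Sum>j\<in>P. real_of_int j - c) = (\<Sum>j\<in>P - {0}. real_of_int j - c) + (0 - c)"
      using fP n0 by (metis (no_types, lifting) add.commute of_int_0 sum.remove)
    have "fc c (shift 1 \<sigma>) = 2 * ((\<Sum>j\<in>A. real_of_int j - c) + real (card A))
       - 2 * ((\<Sum>j\<in>P - {0}. real_of_int j - c) + real (card (P - {0})))"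
      unfolding fc_def eA eP e1 e2 using fA fP
      by (simp add: sum_shift1)
    moreover have "fc c \<sigma> = 2 * (\<Sum>j\<in>A. real_of_int j - c) - 2 * (\<Sum>j\<in>P. real_of_int j - c)"
      by (simp add: fc_def A_def P_def)
    moreover have "real_of_int (Ncount \<sigma>) = real (card A) - real (card P)"
      by (simp add: Ncount_def Nminus_def Nplus_def A_def P_def)
    ultimately show ?thesis using N sP cP by simp
  qed
qed

lemma shift_nat:
  fixes c :: real
  assumes B: "\<sigma> \<in> Bset"
  shows "Ncount (shift (int m) \<sigma>) = Ncount \<sigma> + int m
    \<and> fc c (shift (int m) \<sigma>) = fc c \<sigma> + 2 * int m * Ncount \<sigma> + int m * (int m + 1) - 2 * int m * c"
proof (induction m)
  case 0 then show ?case by simp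
next
  case (Suc m)
  have e: "shift (int (Suc m)) \<sigma> = shift 1 (shift (int m) \<sigma>)"
    by (simp add: shift_add[symmetric] add.commute)
  have "shift (int m) \<sigma> \<in> Bset" using B by (rule shift_Bset)
  from shift1[OF this, of c] Suc show ?case unfolding e
    by (simp add: algebra_simps)
qed

lemma shift_int:
  fixes c :: real
  assumes B: "\<sigma> \<in> Bset"
  shows "Ncount (shift n \<sigma>) = Ncount \<sigma> + n
    \<and> fc c (shift n \<sigma>) = fc c \<sigma> + 2 * n * Ncount \<sigma> + n * (n + 1) - 2 * n * c"
proof (cases "n \<ge> 0")
  case True
  then obtain m where "n = int m" by (metis nonneg_eq_int)
  then show ?thesis using shift_nat[OF B] by simp
next
  case False
  define m where "m = nat (-n)"
  have nm: "n = - int m" using False by (simp add: m_def)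
  define \<tau> where "\<tau> = shift n \<sigma>"
  have tB: "\<tau> \<in> Bset" using B by (simp add: \<tau>_def shift_Bset)
  have "shift (int m) \<tau> = \<sigma>" by (simp add: \<tau>_def shift_add[symmetric] nm)
  with shift_nat[OF tB, of m c] have
    h1: "Ncount \<sigma> = Ncount \<tau> + int m"
    and h2: "fc c \<sigma> = fc c \<tau> + 2 * int m * Ncount \<tau> + int m * (int m + 1) - 2 * int m * c"
    by auto
  have "Ncount \<tau> = Ncount \<sigma> + n" using h1 nm by simp
  moreover have "fc c \<tau> = fc c \<sigma> + 2 * n * Ncount \<sigma> + n * (n + 1) - 2 * n * c"
    using h2 h1 nm by (simp add: algebra_simps)
  ultimately show ?thesis by (simp add: \<tau>_def)
qed

lemma H_shift: "H J (shift n \<sigma>) = H J \<sigma> + Hn J n \<sigma>"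
proof -
  have e: "{i. shift n \<sigma> i \<noteq> shift n \<sigma> (i+1)} = (\<lambda>j. j + n) ` {i. \<sigma> i \<noteq> \<sigma> (i+1)}"
    apply (auto simp: shift_def algebra_simps)
    apply (rule_tac x="x - n" in image_eqI)
    by (auto simp: algebra_simps)
  have "H J (shift n \<sigma>) = (\<Sum>i\<in>{i. \<sigma> i \<noteq> \<sigma> (i+1)}. J (i + n))"
    unfolding H_def e by (subst sum.reindex) (auto simp: inj_on_def)
  then show ?thesis by (simp add: H_def Hn_def sum_subtractf)
qed

lemma weight_shift:
  assumes B: "\<sigma> \<in> Bset" and N0: "Ncount \<sigma> = 0" and q: "0 < q"
  shows "weight \<beta> q c J (shift n \<sigma>) = q powr (- 2 * real_of_int n * c + real_of_int (n * (n + 1)))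
     * (weight \<beta> q c J \<sigma> * exp (- \<beta> * Hn J n \<sigma>))"
proof -
  have f: "fc c (shift n \<sigma>) = fc c \<sigma> + (- 2 * real_of_int n * c + real_of_int (n * (n + 1)))"
    using shift_int[OF B, of n c] N0 by (simp add: algebra_simps)
  show ?thesis unfolding weight_def H_shift f powr_add
    by (simp add: exp_add[symmetric] algebra_simps)
qed

theorem lemma2p6:
  fixes c \<beta> q :: real and J :: "int \<Rightarrow> real" and n :: int
  assumes "\<beta> \<ge> 0" and "0 < q" and "q < 1"
    and "(\<lambda>i::int. inverse (1 + q powr (2 * (real_of_int i - c)) *
            exp (\<beta> * J (i - 1)) / (exp (\<beta> * \<bar>J i\<bar>) + q\<^sup>2 * exp (\<beta> * \<bar>J (i - 2)\<bar>))))
          summable_on {..0}"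
    and "(\<lambda>i::int. inverse (1 + q powr (- 2 * (real_of_int i - c)) *
            exp (\<beta> * J (i - 1)) / (exp (\<beta> * \<bar>J i\<bar>) + q powr (-2) * exp (\<beta> * \<bar>J (i - 2)\<bar>))))
          summable_on {1..}"
  shows "mu_prob \<beta> q c J {\<sigma>. Ncount \<sigma> = n}
       = q powr (- 2 * real_of_int n * c + real_of_int (n * (n + 1)))
         * mu_exp \<beta> q c J (\<lambda>\<sigma>. indicator {\<sigma>. Ncount \<sigma> = 0} \<sigma> * exp (- \<beta> * Hn J n \<sigma>))"
proof -
  define E where "E = q powr (- 2 * real_of_int n * c + real_of_int (n * (n + 1)))"
  define B0 where "B0 = Bset \<inter> {\<sigma>. Ncount \<sigma> = 0}"
  define Bn where "Bn = Bset \<inter> {\<sigma>. Ncount \<sigma> = n}"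
  have bij: "bij_betw (shift n) B0 Bn"
  proof (rule bij_betw_byWitness[where f'="shift (-n)"])
    show "\<forall>a\<in>B0. shift (- n) (shift n a) = a" by (simp add: shift_add[symmetric])
    show "\<forall>a\<in>Bn. shift n (shift (- n) a) = a" by (simp add: shift_add[symmetric])
    show "shift n ` B0 \<subseteq> Bn" using shift_int[of _ n c] shift_Bset
      by (auto simp: B0_def Bn_def)
    show "shift (- n) ` Bn \<subseteq> B0" using shift_int[of _ "-n" c] shift_Bset
      by (auto simp: B0_def Bn_def)
  qed
  have L: "(\<Sum>\<^sub>\<infinity>\<sigma>\<in>Bset. weight \<beta> q c J \<sigma> * indicator {\<sigma>. Ncount \<sigma> = n} \<sigma>)
      = (\<Sum>\<^sub>\<infinity>\<sigma>\<in>Bn. weight \<beta> q c J \<sigma>)"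
    by (rule infsum_cong_neutral) (auto simp: Bn_def)
  have R: "(\<Sum>\<^sub>\<infinity>\<sigma>\<in>Bset. weight \<beta> q c J \<sigma> * (indicator {\<sigma>. Ncount \<sigma> = 0} \<sigma> * exp (- \<beta> * Hn J n \<sigma>)))
      = (\<Sum>\<^sub>\<infinity>\<sigma>\<in>B0. weight \<beta> q c J \<sigma> * exp (- \<beta> * Hn J n \<sigma>))"
    by (rule infsum_cong_neutral) (auto simp: B0_def)
  have "(\<Sum>\<^sub>\<infinity>\<sigma>\<in>Bn. weight \<beta> q c J \<sigma>) = (\<Sum>\<^sub>\<infinity>\<sigma>\<in>B0. weight \<beta> q c J (shift n \<sigma>))"
    by (rule infsum_reindex_bij_betw[OF bij, symmetric])
  also have "\<dots> = (\<Sum>\<^sub>\<infinity>\<sigma>\<in>B0. E * (weight \<beta> q c J \<sigma> * exp (- \<beta> * Hn J n \<sigma>)))"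
    by (rule infsum_cong, unfold B0_def E_def) (rule weight_shift, auto simp: assms(2))
  also have "\<dots> = E * (\<Sum>\<^sub>\<infinity>\<sigma>\<in>B0. weight \<beta> q c J \<sigma> * exp (- \<beta> * Hn J n \<sigma>))"
    by (rule infsum_cmult_right')
  finally show ?thesis
    unfolding mu_prob_def mu_exp_def L R E_def[symmetric] by simp
qed

end
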